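(* Let $J$ be a compatible almost complex structure on $T^*S$ and $\delta\in(0,\delta_0)$ such that for every link $K\subset B(\delta)$, every $J$-holomorphic disk with boundary on $\overline\Lambda_K$ and one positive puncture lies in $\{|p|<2\delta_0\}$. Let $K\subset B(\delta)$ be a link transverse to $\xi_0$. Then $\overline\Lambda_K$ and $\overline H_\pm$ are disjoint in $T^*S$, and $\overline H_\pm\setminus\overline H_\pm(2\delta_0)$ does not intersect any $J$-holomorphic disk with boundary on $\overline\Lambda_K$ and one positive puncture.
   Context: $\alpha_0=dx_3-x_2\,dx_1+x_1\,dx_2$, $\xi_0=\ker\alpha_0$; $B(\delta)$ is the ball of radius $\delta$ about the origin of $\mathbb{R}^3$. Fix $\delta_0>0$ and let $S\subset\mathbb{R}^3$ be the smooth boundary of a compact convex set containing the origin in its interior, symmetric under reflection in the $y_1y_2$-plane and rotations about the $y_3$-axis, with $S\cap\{y_1^2+y_2^2\le9\delta_0^2\}=\{(y_1,y_2,\pm1):y_1^2+y_2^2\le9\delta_0^2\}$; $\nu$ its outward unit normal; $E_{2\delta_0}=\{(y_1,y_2,\pm1):y_1^2+y_2^2\le4\delta_0^2\}$. $S^*\mathbb{R}^3=\mathbb{R}^3\times S$ is identified with $J^1(S)=T^*S\times\mathbb{R}$ (contact form $dz-p\,dq$, $p\in T_qS$, $|p|$ Euclidean) via $(x,y)\mapsto(y,x-(x\cdot\nu(y))\nu(y),x\cdot y)$; bars denote images under the projection to $T^*S$. $\Lambda_K=\{(x,y): x\in K,\ y\perp T_xK\}$ is the conormal lift; $H_\pm=\{(x,y):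 y=t(-x_2,x_1,1),\ \pm t>0\}$; $H_\pm(2\delta_0)=H_\pm\cap(T^*E_{2\delta_0}\times\mathbb{R})$. Holomorphic disks have punctures at double points of $\overline\Lambda_K$; a puncture is positive if the boundary arc before it lies on the lower sheet and the arc after it on the upper sheet. *)

theory Defs
  imports "HOL-Analysis.Analysis"
begin

type_synonym R3 = "real^3"
type_synonym pt6 = "(real^3) \<times> (real^3)"

fun Ck :: "nat \<Rightarrow> ('a::euclidean_space \<Rightarrow> 'b::real_normed_vector) \<Rightarrow> 'a set \<Rightarrow> bool" where
  "Ck 0 f U = continuous_on U f"
| "Ck (Suc k) f U = ((\<forall>x\<in>U. f differentiable (at x)) \<and>
      (\<forall>v. Ck k (\<lambda>x. frechet_derivative f (at x) v) U))"

definition smooth_on :: "'a::euclidean_space set \<Rightarrow> ('a \<Rightarrow> 'b::real_normed_vector) \<Rightarrow> bool" where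
  "smooth_on U f = (\<forall>k. Ck k f U)"

definition tangent_space :: "'a::euclidean_space set \<Rightarrow> 'a \<Rightarrow> 'a set" where
  "tangent_space M m = {v. \<exists>\<gamma>::real \<Rightarrow> 'a. (\<forall>t. \<gamma> t \<in> M) \<and> \<gamma> 0 = m \<and> (\<gamma> has_vector_derivative v) (at 0)}"

definition smooth_surface :: "R3 set \<Rightarrow> bool" where
  "smooth_surface S = (\<forall>y\<in>S. \<exists>U F. open U \<and> y \<in> U \<and> smooth_on U (F :: R3 \<Rightarrow> real) \<and>
      (\<forall>z\<in>U. \<exists>v. frechet_derivative F (at z) v \<noteq> 0) \<and> S \<inter> U = {z\<in>U. F z = 0})"

definition outward_normal :: "R3 set \<Rightarrow> R3 \<Rightarrow> R3" where
  "outward_normal C y = (THE n. norm n = 1 \<and> (\<forall>c\<in>C. n \<bullet> (c - y) \<le> 0))"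

definition rot3 :: "real \<Rightarrow> R3 \<Rightarrow> R3" where
  "rot3 \<theta> y = vector [cos \<theta> * y$1 - sin \<theta> * y$2, sin \<theta> * y$1 + cos \<theta> * y$2, y$3]"

definition refl3 :: "R3 \<Rightarrow> R3" where
  "refl3 y = vector [y$1, y$2, - (y$3)]"

definition admissible_S :: "real \<Rightarrow> R3 set \<Rightarrow> R3 set \<Rightarrow> bool" where
  "admissible_S \<delta>0 C S = (compact C \<and> convex C \<and> 0 \<in> interior C \<and> S = frontier C \<and>
      smooth_surface S \<and> (\<forall>y\<in>S. refl3 y \<in> S) \<and> (\<forall>\<theta>. \<forall>y\<in>S. rot3 \<theta> y \<in> S) \<and>
      S \<inter> {y. (y$1)\<^sup>2 + (y$2)\<^sup>2 \<le> 9 * \<delta>0\<^sup>2} =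
        {y. (y$1)\<^sup>2 + (y$2)\<^sup>2 \<le> 9 * \<delta>0\<^sup>2 \<and> (y$3 = 1 \<or> y$3 = -1)})"

definition E_set :: "real \<Rightarrow> R3 set" where
  "E_set r = {y. (y$1)\<^sup>2 + (y$2)\<^sup>2 \<le> r\<^sup>2 \<and> (y$3 = 1 \<or> y$3 = -1)}"

text \<open>T^*S realised as pairs (q,p), q in S, p tangent to S at q.\<close>
definition TstarS :: "R3 set \<Rightarrow> (R3 \<Rightarrow> R3) \<Rightarrow> pt6 set" where
  "TstarS S \<nu> = {(q,p). q \<in> S \<and> p \<bullet> \<nu> q = 0}"

text \<open>Projection R^3 x S = S^*R^3 = J^1(S) to T^*S (the 'bar').\<close>
definition bar :: "(R3 \<Rightarrow> R3) \<Rightarrow> pt6 \<Rightarrow> pt6" where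
  "bar \<nu> a = (snd a, fst a - (fst a \<bullet> \<nu> (snd a)) *\<^sub>R \<nu> (snd a))"

text \<open>The z-coordinate of J^1(S) of a point (x,y) of R^3 x S.\<close>
definition zcoord :: "pt6 \<Rightarrow> real" where
  "zcoord a = fst a \<bullet> snd a"

text \<open>Symplectic form on T^*S: omega = -d(p dq) = dq /\ dp, so that disks with one
  positive puncture have positive energy.\<close>
definition omega :: "pt6 \<Rightarrow> pt6 \<Rightarrow> real" where
  "omega v w = fst v \<bullet> snd w - snd v \<bullet> fst w"

definition compatible_acs :: "R3 set \<Rightarrow> (R3 \<Rightarrow> R3) \<Rightarrow> (pt6 \<Rightarrow> pt6 \<Rightarrow> pt6) \<Rightarrow> bool" where
  "compatible_acs S \<nu> J = (
     (\<exists>U. open U \<and> TstarS S \<nu> \<subseteq> U \<and> (\<forall>v. smooth_on U (\<lambda>m. J m v))) \<and>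
     (\<forall>m\<in>TstarS S \<nu>. linear (J m) \<and>
        (\<forall>v\<in>tangent_space (TstarS S \<nu>) m.
            J m v \<in> tangent_space (TstarS S \<nu>) m \<and> J m (J m v) = - v \<and>
            (v \<noteq> 0 \<longrightarrow> omega v (J m v) > 0) \<and>
            (\<forall>w\<in>tangent_space (TstarS S \<nu>) m. omega (J m v) (J m w) = omega v w))))"

definition alpha0 :: "R3 \<Rightarrow> R3 \<Rightarrow> real" where
  "alpha0 x v = v$3 - x$2 * v$1 + x$1 * v$2"

definition is_link :: "R3 set \<Rightarrow> bool" where
  "is_link K = (\<exists>n::nat. \<exists>\<gamma>::nat \<Rightarrow> real \<Rightarrow> R3. n \<ge> 1 \<and> K = (\<Union>i<n. range (\<gamma> i)) \<and>
      (\<forall>i<n. smooth_on UNIV (\<gamma> i) \<and> (\<forall>t. \<gamma> i (t + 1) = \<gamma> i t) \<and> inj_on (\<gamma> i) {0..<1} \<and>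
             (\<forall>t. vector_derivative (\<gamma> i) (at t) \<noteq> 0)) \<and>
      (\<forall>i<n. \<forall>j<n. i \<noteq> j \<longrightarrow> range (\<gamma> i) \<inter> range (\<gamma> j) = {}))"

definition transverse_xi0 :: "R3 set \<Rightarrow> bool" where
  "transverse_xi0 K = (\<forall>x\<in>K. \<forall>v\<in>tangent_space K x. v \<noteq> 0 \<longrightarrow> alpha0 x v \<noteq> 0)"

definition LambdaK :: "R3 set \<Rightarrow> R3 set \<Rightarrow> pt6 set" where
  "LambdaK S K = {(x,y). x \<in> K \<and> y \<in> S \<and> (\<forall>v\<in>tangent_space K x. y \<bullet> v = 0)}"

text \<open>H_+ for sigma = 1, H_- for sigma = -1.\<close>
definition Hset :: "R3 set \<Rightarrow> real \<Rightarrow> pt6 set" where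
  "Hset S \<sigma> = {(x,y). y \<in> S \<and> (\<exists>t. \<sigma> * t > 0 \<and> y = t *\<^sub>R vector [- (x$2), x$1, 1])}"

definition Hset_r :: "R3 set \<Rightarrow> real \<Rightarrow> real \<Rightarrow> pt6 set" where
  "Hset_r S \<sigma> r = {a \<in> Hset S \<sigma>. snd a \<in> E_set r}"

text \<open>u is a J-holomorphic disk with boundary punctures P and boundary on bar(Lambda_K),
  lifting along the boundary to the Legendrian Lambda_K via ul; at each puncture the lift
  jumps from a^- (arc before the puncture, counterclockwise) to a^+ (arc after).\<close>
definition hol_disk :: "R3 set \<Rightarrow> (R3 \<Rightarrow> R3) \<Rightarrow> (pt6 \<Rightarrow> pt6 \<Rightarrow> pt6) \<Rightarrow> R3 set
     \<Rightarrow> complex set \<Rightarrow> (complex \<Rightarrow> pt6) \<Rightarrow> (complex \<Rightarrow> pt6) \<Rightarrow> bool" where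
  "hol_disk S \<nu> J K P u ul = (finite P \<and> P \<subseteq> sphere 0 1 \<and>
     u ` (cball 0 1 - P) \<subseteq> TstarS S \<nu> \<and> continuous_on (cball 0 1 - P) u \<and>
     smooth_on (ball 0 1) u \<and>
     (\<forall>z\<in>ball 0 1. frechet_derivative u (at z) \<i> = J (u z) (frechet_derivative u (at z) 1)) \<and>
     continuous_on (sphere 0 1 - P) ul \<and> ul ` (sphere 0 1 - P) \<subseteq> LambdaK S K \<and>
     (\<forall>z\<in>sphere 0 1 - P. bar \<nu> (ul z) = u z) \<and>
     (\<forall>p\<in>P. \<exists>am ap. am \<in> LambdaK S K \<and> ap \<in> LambdaK S K \<and> am \<noteq> ap \<and> bar \<nu> am = bar \<nu> ap \<and>
        ((\<lambda>s. ul (p * exp (\<i> * complex_of_real s))) \<longlongrightarrow> am) (at_left 0) \<and>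
        ((\<lambda>s. ul (p * exp (\<i> * complex_of_real s))) \<longlongrightarrow> ap) (at_right 0) \<and>
        (u \<longlongrightarrow> bar \<nu> am) (at p within (cball 0 1 - P))))"

definition positive_puncture :: "(complex \<Rightarrow> pt6) \<Rightarrow> complex \<Rightarrow> bool" where
  "positive_puncture ul p = (\<exists>am ap.
        ((\<lambda>s. ul (p * exp (\<i> * complex_of_real s))) \<longlongrightarrow> am) (at_left 0) \<and>
        ((\<lambda>s. ul (p * exp (\<i> * complex_of_real s))) \<longlongrightarrow> ap) (at_right 0) \<and>
        zcoord am < zcoord ap)"

definition hol_disk_one_pos :: "R3 set \<Rightarrow> (R3 \<Rightarrow> R3) \<Rightarrow> (pt6 \<Rightarrow> pt6 \<Rightarrow> pt6) \<Rightarrow> R3 set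
     \<Rightarrow> complex set \<Rightarrow> (complex \<Rightarrow> pt6) \<Rightarrow> bool" where
  "hol_disk_one_pos S \<nu> J K P u = (\<exists>ul. hol_disk S \<nu> J K P u ul \<and>
      card {p\<in>P. positive_puncture ul p} = 1)"

end

theory Submission imports Defs begin
lemma inner3: "(x::real^3) \<bullet> y = x$1*y$1 + x$2*y$2 + x$3*y$3"
  by (simp add: inner_vec_def sum_3)
lemma normsq3: "(norm (x::real^3))^2 = (x$1)^2+(x$2)^2+(x$3)^2"
proof -
  have "(norm x)^2 = x \<bullet> x" by (simp add: power2_norm_eq_inner)
  then show ?thesis by (simp add: inner3 power2_eq_square)
qed
lemma supp_exists:
  assumes "compact C" "convex C" "0 \<in> interior C" "y \<in> frontier (C::R3 set)"
  shows "\<exists>n. norm n = 1 \<and> (\<forall>c\<in>C. n \<bullet> (c - y) \<le> 0)"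
proof -
  have ri: "rel_interior C = interior C" using assms(3) rel_interior_nonempty_interior by blast
  have cl: "closure C = C" using assms(1) by (simp add: compact_imp_closed)
  have "y \<in> closure C" "y \<notin> rel_interior C" using assms(4) ri by (auto simp: frontier_def)
  then obtain a where a: "a \<noteq> 0" "\<And>z. z \<in> closure C \<Longrightarrow> a \<bullet> y \<le> a \<bullet> z"
    using supporting_hyperplane_relative_frontier[OF assms(2)] by metis
  define n where "n = - (1/norm a) *\<^sub>R a"
  have "norm n = 1" using a by (simp add: n_def)
  moreover have "n \<bullet> (c - y) \<le> 0" if "c \<in> C" for c
  proof -
    have "a \<bullet> y \<le> a \<bullet> c" using a(2) that cl by auto
    then show ?thesis using a by (simp add: n_def inner_diff_right divide_simps)
  qed
  ultimately show ?thesis by blast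
qed
lemma supp_pos:
  assumes "0 \<in> interior C" "norm n = 1" "\<forall>c\<in>C. n \<bullet> (c - y) \<le> (0::real)"
  shows "n \<bullet> (y::R3) > 0"
proof -
  obtain e where e: "e > 0" "ball 0 e \<subseteq> C" using assms(1) by (meson mem_interior)
  have "(e/2) *\<^sub>R n \<in> ball 0 e" using e assms(2) by simp
  then have "n \<bullet> ((e/2) *\<^sub>R n - y) \<le> 0" using assms(3) e by blast
  moreover have "n \<bullet> n = 1" using assms(2) by (simp add: dot_square_norm)
  ultimately show ?thesis using e by (simp add: inner_diff_right)
qed
lemma supp_tangent:
  fixes F :: "R3 \<Rightarrow> real" and n y v w :: R3
  assumes hd: "(F has_derivative D) (at y)" and cont: "continuous_on U F" and U: "open U" "y \<in> U"
   and Fy: "F y = 0"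
   and sub: "{z\<in>U. F z = 0} \<subseteq> C" and supp: "\<forall>c\<in>C. n \<bullet> (c-y) \<le> 0" and Dv: "D v = 0"
   and w: "D w \<noteq> 0"
  shows "n \<bullet> v \<le> 0"
proof (rule ccontr)
  assume "\<not> n \<bullet> v \<le> 0"
  then have al: "n \<bullet> v > 0" by simp
  have bl: "bounded_linear D" using hd has_derivative_bounded_linear by blast
  then have lin: "linear D" using bounded_linear.linear by blast
  define w' where "w' = (if D w > 0 then w else -w)"
  have be: "D w' > 0" using w linear_neg[OF lin, of w] by (auto simp: w'_def)
  define c where "c = (n \<bullet> v) / (2*(\<bar>n \<bullet> w'\<bar>+1))"
  have c0: "c > 0" using al by (simp add: c_def)
  have cw: "c * \<bar>n \<bullet> w'\<bar> \<le> (n \<bullet> v)/2"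
  proof -
    have "c * \<bar>n \<bullet> w'\<bar> \<le> c * (\<bar>n \<bullet> w'\<bar>+1)" using c0 by simp
    also have "\<dots> = (n \<bullet> v)/2"
    proof -
      have "\<bar>n \<bullet> w'\<bar>+1 > 0" by simp
      then show ?thesis by (simp add: c_def field_simps)
    qed
    finally show ?thesis .
  qed
  define L where "L = norm v + c * norm w' + 1"
  have L0: "L > 0"
  proof -
    have "c * norm w' \<ge> 0" using c0 by simp
    moreover have "norm v \<ge> 0" by simp
    ultimately show ?thesis unfolding L_def by linarith
  qed
  define \<eta> where "\<eta> = c * D w' / (2*L)"
  have et: "\<eta> > 0" using c0 be L0 by (simp add: \<eta>_def)
  obtain d where d: "d > 0" "\<forall>z. norm (z - y) < d \<longrightarrow> norm (F z - F y - D (z - y)) \<le> \<eta> * norm (z - y)"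
    using hd et unfolding has_derivative_at_alt by blast
  obtain r where r: "r > 0" "ball y r \<subseteq> U" using U by (meson open_contains_ball)
  define \<epsilon> where "\<epsilon> = min d r / (2*L)"
  have e0: "\<epsilon> > 0" using d r L0 by (simp add: \<epsilon>_def)
  have eL: "\<epsilon> * L < min d r"
  proof -
    have "\<epsilon> * L = min d r / 2" using L0 by (simp add: \<epsilon>_def)
    moreover have "min d r > 0" using d r by simp
    ultimately show ?thesis by linarith
  qed
  define p where "p s = y + \<epsilon> *\<^sub>R v + s *\<^sub>R w'" for s
  have pn: "norm (p s - y) < min d r" if "\<bar>s\<bar> \<le> c*\<epsilon>" for s
  proof -
    have "norm (p s - y) \<le> \<epsilon> * norm v + \<bar>s\<bar> * norm w'"
      unfolding p_def using e0 norm_triangle_ineq[of "\<epsilon> *\<^sub>R v" "s *\<^sub>R w'"] by simp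
    also have "\<dots> \<le> \<epsilon> * norm v + c*\<epsilon> * norm w'"
      using that by (simp add: mult_right_mono)
    also have "\<dots> < \<epsilon> * L" using e0 by (simp add: L_def algebra_simps)
    finally show ?thesis using eL by simp
  qed
  have Dp: "D (p s - y) = s * D w'" for s
    using Dv linear_add[OF lin] linear_scale[OF lin] by (simp add: p_def)
  have est: "\<bar>F (p s) - s * D w'\<bar> \<le> c * \<epsilon> * D w' / 2" if "\<bar>s\<bar> \<le> c*\<epsilon>" for s
  proof -
    have "norm (p s - y) < d" using pn[OF that] by simp
    then have "\<bar>F (p s) - s * D w'\<bar> \<le> \<eta> * norm (p s - y)" using d(2) Fy Dp by fastforce
    also have "\<dots> \<le> \<eta> * (\<epsilon> * L)"
    proof -
      have "norm (p s - y) \<le> \<epsilon> * norm v + \<bar>s\<bar> * norm w'"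
        unfolding p_def using e0 norm_triangle_ineq[of "\<epsilon> *\<^sub>R v" "s *\<^sub>R w'"] by simp
      also have "\<dots> \<le> \<epsilon> * norm v + c*\<epsilon> * norm w'"
        using that by (simp add: mult_right_mono)
      also have "\<dots> \<le> \<epsilon> * L" using e0 by (simp add: L_def algebra_simps)
      finally show ?thesis using et by simp
    qed
    also have "\<dots> = c * \<epsilon> * D w' / 2" using L0 by (simp add: \<eta>_def)
    finally show ?thesis .
  qed
  have ce: "c*\<epsilon> > 0" using c0 e0 by simp
  have cb: "c*\<epsilon>*D w' > 0" using ce be by simp
  have f1: "F (p (-(c*\<epsilon>))) \<le> 0" using est[of "-(c*\<epsilon>)"] cb ce unfolding abs_le_iff by auto
  have f2: "0 \<le> F (p (c*\<epsilon>))" using est[of "c*\<epsilon>"] cb ce unfolding abs_le_iff by auto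
  have pU: "p s \<in> U" if "s \<in> {-(c*\<epsilon>)..c*\<epsilon>}" for s
  proof -
    have "norm (p s - y) < r" using pn[of s] that by auto
    then show ?thesis using r by (auto simp: dist_norm norm_minus_commute)
  qed
  have "continuous_on {-(c*\<epsilon>)..c*\<epsilon>} (\<lambda>s. F (p s))"
  proof (rule continuous_on_compose2[OF cont])
    show "continuous_on {-(c*\<epsilon>)..c*\<epsilon>} p" unfolding p_def by (intro continuous_intros)
    show "p ` {-(c*\<epsilon>)..c*\<epsilon>} \<subseteq> U" using pU by blast
  qed
  then obtain s where s: "s \<ge> -(c*\<epsilon>)" "s \<le> c*\<epsilon>" "F (p s) = 0"
    using IVT'[of "\<lambda>s. F (p s)" "-(c*\<epsilon>)" 0 "c*\<epsilon>"] f1 f2 ce by auto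
  then have "p s \<in> C" using sub pU by auto
  then have le: "n \<bullet> (p s - y) \<le> 0" using supp by blast
  have "n \<bullet> (p s - y) = \<epsilon> * (n \<bullet> v) + s * (n \<bullet> w')" by (simp add: p_def inner_add_right)
  moreover have "s * (n \<bullet> w') \<ge> - ((c*\<epsilon>) * \<bar>n \<bullet> w'\<bar>)"
  proof -
    have "\<bar>s * (n \<bullet> w')\<bar> \<le> (c*\<epsilon>) * \<bar>n \<bullet> w'\<bar>"
      using s by (simp add: abs_mult mult_right_mono)
    then show ?thesis unfolding abs_le_iff by simp
  qed
  moreover have "(c*\<epsilon>) * \<bar>n \<bullet> w'\<bar> \<le> \<epsilon> * (n \<bullet> v)/2"
    using mult_left_mono[OF cw, of \<epsilon>] e0 by (simp add: algebra_simps)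
  ultimately have "n \<bullet> (p s - y) \<ge> \<epsilon> * (n \<bullet> v)/2" by linarith
  moreover have "\<epsilon> * (n \<bullet> v)/2 > 0" using e0 al by simp
  ultimately show False using le by linarith
qed
lemma perp_par:
  fixes n g :: R3
  assumes "g \<noteq> 0" "\<forall>v. v \<bullet> g = 0 \<longrightarrow> n \<bullet> v = 0"
  shows "n = ((n \<bullet> g)/(g \<bullet> g)) *\<^sub>R g"
proof -
  define m where "m = n - ((n \<bullet> g)/(g \<bullet> g)) *\<^sub>R g"
  have gg: "g \<bullet> g \<noteq> 0" using assms(1) by simp
  have "m \<bullet> g = 0" using gg by (simp add: m_def inner_diff_left)
  then have nm: "n \<bullet> m = 0" using assms(2) by blast
  have "m \<bullet> m = n \<bullet> m - ((n \<bullet> g)/(g \<bullet> g)) * (g \<bullet> m)"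
    by (simp add: m_def inner_diff_left)
  also have "\<dots> = 0" using nm \<open>m \<bullet> g = 0\<close> by (simp add: inner_commute)
  finally have "m = 0" by simp
  then show ?thesis by (simp add: m_def)
qed

lemma supp_unique:
  assumes ss: "smooth_surface S" "S \<subseteq> C" "y \<in> S" "0 \<in> interior C"
    and n1: "norm n1 = 1" "\<forall>c\<in>C. n1 \<bullet> (c-y) \<le> 0"
    and n2: "norm n2 = 1" "\<forall>c\<in>C. n2 \<bullet> (c-y) \<le> 0"
  shows "n1 = n2"
proof -
  obtain U F where UF: "open U" "y \<in> U" "smooth_on U (F :: R3 \<Rightarrow> real)"
      "\<forall>z\<in>U. \<exists>v. frechet_derivative F (at z) v \<noteq> 0" "S \<inter> U = {z\<in>U. F z = 0}"
    using ss(1,3) unfolding smooth_surface_def by blast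
  have "Ck 0 F U" "Ck (Suc 0) F U" using UF(3) unfolding smooth_on_def by blast+
  then have cont: "continuous_on U F" and dif: "F differentiable (at y)" using UF(2) by auto
  define D where "D = frechet_derivative F (at y)"
  have hd: "(F has_derivative D) (at y)" using dif frechet_derivative_works D_def by blast
  have lin: "linear D" using hd has_derivative_bounded_linear bounded_linear.linear by blast
  obtain w where w: "D w \<noteq> 0" using UF(2,4) D_def by blast
  have Fy: "F y = 0" using UF(5) ss(3) UF(2) by blast
  have sub: "{z\<in>U. F z = 0} \<subseteq> C" using UF(5) ss(2) by blast
  define g where "g = adjoint D 1"
  have Dg: "D x = x \<bullet> g" for x using adjoint_works[OF lin, of x 1] by (simp add: g_def)
  have g0: "g \<noteq> 0" using w Dg by auto
  have perp: "\<forall>v. v \<bullet> g = 0 \<longrightarrow> n \<bullet> v = 0" if "\<forall>c\<in>C. n \<bullet> (c-y) \<le> 0" for n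
  proof (intro allI impI)
    fix v assume "v \<bullet> g = 0"
    then have "D v = 0" "D (-v) = 0" using Dg by auto
    then have "n \<bullet> v \<le> 0" "n \<bullet> (-v) \<le> 0"
      using supp_tangent[OF hd cont UF(1,2) Fy sub that, of _ w] w by blast+
    then show "n \<bullet> v = 0" by simp
  qed
  define k1 where "k1 = (n1 \<bullet> g)/(g \<bullet> g)"
  define k2 where "k2 = (n2 \<bullet> g)/(g \<bullet> g)"
  have e1: "n1 = k1 *\<^sub>R g" using perp_par[OF g0 perp[OF n1(2)]] k1_def by simp
  have e2: "n2 = k2 *\<^sub>R g" using perp_par[OF g0 perp[OF n2(2)]] k2_def by simp
  have "\<bar>k1\<bar> * norm g = 1" "\<bar>k2\<bar> * norm g = 1" using e1 e2 n1(1) n2(1) by auto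
  then have ab: "\<bar>k1\<bar> = \<bar>k2\<bar>" by (metis mult_right_cancel norm_zero g0 zero_neq_one mult_zero_right)
  have "n1 \<bullet> y > 0" "n2 \<bullet> y > 0" using supp_pos[OF ss(4)] n1 n2 by blast+
  then have "k1 * (g \<bullet> y) > 0" "k2 * (g \<bullet> y) > 0" using e1 e2 by auto
  then have "k1 = k2" using ab
    by (cases "k1 \<ge> 0"; cases "k2 \<ge> 0"; cases "g \<bullet> y \<ge> 0")
       (auto simp: zero_less_mult_iff abs_if split: if_splits)
  then show ?thesis using e1 e2 by simp
qed
lemma adm_facts:
  assumes "admissible_S \<delta>0 C S"
  shows "compact C" "convex C" "0 \<in> interior C" "S = frontier C" "S \<subseteq> C" "smooth_surface S"
    "\<forall>\<theta>. \<forall>y\<in>S. rot3 \<theta> y \<in> S"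
    "S \<inter> {y. (y$1)\<^sup>2 + (y$2)\<^sup>2 \<le> 9 * \<delta>0\<^sup>2} =
        {y. (y$1)\<^sup>2 + (y$2)\<^sup>2 \<le> 9 * \<delta>0\<^sup>2 \<and> (y$3 = 1 \<or> y$3 = -1)}"
  using assms unfolding admissible_S_def
  by (auto simp: compact_imp_closed frontier_subset_closed dest!: frontier_subset_closed[OF compact_imp_closed])

lemma nu_prop:
  assumes "admissible_S \<delta>0 C S" "y \<in> S"
  shows "norm (outward_normal C y) = 1 \<and> (\<forall>c\<in>C. outward_normal C y \<bullet> (c - y) \<le> 0)"
proof -
  note a = adm_facts[OF assms(1)]
  have "\<exists>!n. norm n = 1 \<and> (\<forall>c\<in>C. n \<bullet> (c - y) \<le> 0)"
  proof -
    obtain n where "norm n = 1 \<and> (\<forall>c\<in>C. n \<bullet> (c - y) \<le> 0)"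
      using supp_exists[OF a(1,2,3)] assms(2) a(4) by blast
    then show ?thesis using supp_unique[OF a(6,5) assms(2) a(3)] by blast
  qed
  from theI'[OF this] show ?thesis unfolding outward_normal_def by (simp add: inner_commute)
qed

lemma nu_rot:
  assumes "admissible_S \<delta>0 C S" "y \<in> S"
  shows "outward_normal C y $ 2 * y$1 - outward_normal C y $ 1 * y$2 = 0"
proof -
  note a = adm_facts[OF assms(1)]
  define N where "N = outward_normal C y"
  have supp: "\<forall>c\<in>C. N \<bullet> (c - y) \<le> 0" using nu_prop[OF assms] N_def by blast
  define \<phi> where "\<phi> \<theta> = N$1*(cos \<theta>*y$1 - sin \<theta>*y$2 - y$1) + N$2*(sin \<theta>*y$1 + cos \<theta>*y$2 - y$2)" for \<theta>
  have ph: "\<phi> \<theta> = N \<bullet> (rot3 \<theta> y - y)" for \<theta>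
    by (simp add: \<phi>_def inner3 rot3_def)
  have le: "\<phi> \<theta> \<le> \<phi> 0" for \<theta>
  proof -
    have "rot3 \<theta> y \<in> C" using a(7) a(5) assms(2) by blast
    then show ?thesis using supp ph by (simp add: \<phi>_def)
  qed
  have "DERIV \<phi> 0 :> N$1*(-(sin 0)*y$1 - cos 0*y$2) + N$2*(cos 0*y$1 - sin 0*y$2)"
    unfolding \<phi>_def by (rule derivative_eq_intros refl | simp)+
  then have "N$1*(-(sin 0)*y$1 - cos 0*y$2) + N$2*(cos 0*y$1 - sin 0*y$2) = 0"
    by (rule DERIV_local_max[of _ _ _ 1]) (use le in auto)
  then show ?thesis by (simp add: N_def algebra_simps)
qed
lemma nu_flat:
  assumes adm: "admissible_S \<delta>0 C S" and d0: "\<delta>0 > 0" and yS: "y \<in> S"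
    and R: "(y$1)\<^sup>2 + (y$2)\<^sup>2 < 9 * \<delta>0\<^sup>2"
  shows "(y$3 = 1 \<or> y$3 = -1) \<and> outward_normal C y = vector [0,0,y$3]"
proof -
  note a = adm_facts[OF adm]
  define N where "N = outward_normal C y"
  have supp: "\<forall>c\<in>C. N \<bullet> (c - y) \<le> 0" and nN: "norm N = 1" using nu_prop[OF adm yS] N_def by blast+
  have "y \<in> S \<inter> {y. (y$1)\<^sup>2 + (y$2)\<^sup>2 \<le> 9 * \<delta>0\<^sup>2}" using yS R by simp
  then have y3: "y$3 = 1 \<or> y$3 = -1" unfolding a(8) by simp
  define m where "m = 9 * \<delta>0\<^sup>2 - ((y$1)\<^sup>2 + (y$2)\<^sup>2)"
  have m0: "m > 0" using R by (simp add: m_def)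
  define e where "e = min 1 (m / (2*\<bar>y$1\<bar> + 2*\<bar>y$2\<bar> + 1))"
  have e0: "e > 0" using m0 by (simp add: e_def add_pos_nonneg)
  have e1: "e \<le> 1" by (simp add: e_def)
  have em: "e * (2*\<bar>y$1\<bar> + 2*\<bar>y$2\<bar> + 1) \<le> m"
  proof -
    have p: "2*\<bar>y$1\<bar> + 2*\<bar>y$2\<bar> + 1 > 0" by (simp add: add_pos_nonneg)
    have "e \<le> m / (2*\<bar>y$1\<bar> + 2*\<bar>y$2\<bar> + 1)" by (simp add: e_def)
    then show ?thesis using p by (simp add: pos_le_divide_eq)
  qed
  have sq: "(z + b)\<^sup>2 \<le> z\<^sup>2 + e * (2*\<bar>z\<bar> + 1)" if "\<bar>b\<bar> \<le> e" for z b :: real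
  proof -
    have "(z+b)\<^sup>2 = z\<^sup>2 + 2*b*z + b*b" by (simp add: power2_eq_square algebra_simps)
    moreover have "2*b*z \<le> 2*e*\<bar>z\<bar>"
    proof -
      have "2*b*z \<le> \<bar>2*b*z\<bar>" by simp
      also have "\<dots> = 2*\<bar>b\<bar>*\<bar>z\<bar>" by (simp add: abs_mult)
      also have "\<dots> \<le> 2*e*\<bar>z\<bar>" using that by (simp add: mult_right_mono)
      finally show ?thesis .
    qed
    moreover have "b*b \<le> e" 
    proof -
      have "b*b = \<bar>b\<bar>*\<bar>b\<bar>" by (simp add: abs_mult[symmetric])
      also have "\<dots> \<le> e * 1" using that e1 by (intro mult_mono) auto
      finally show ?thesis by simp
    qed
    ultimately show ?thesis by (simp add: algebra_simps)
  qed
  have t1: "N$1 * b \<le> 0" if "\<bar>b\<bar> \<le> e" for b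
  proof -
    define d where "d = (vector [y$1 + b, y$2, y$3] :: R3)"
    have "(d$1)\<^sup>2 + (d$2)\<^sup>2 \<le> 9 * \<delta>0\<^sup>2"
    proof -
      have A: "e * (2*\<bar>y$1\<bar> + 1) \<le> e * (2*\<bar>y$1\<bar> + 2*\<bar>y$2\<bar> + 1)"
        using e0 by (intro mult_left_mono) auto
      show ?thesis using sq[OF that, of "y$1"] A em by (simp add: d_def m_def)
    qed
    then have "d \<in> {y. (y$1)\<^sup>2 + (y$2)\<^sup>2 \<le> 9 * \<delta>0\<^sup>2 \<and> (y$3 = 1 \<or> y$3 = -1)}"
      using y3 by (simp add: d_def)
    then have "d \<in> S" unfolding a(8)[symmetric] by blast
    then have "N \<bullet> (d - y) \<le> 0" using supp a(5) by blast
    then show ?thesis by (simp add: inner3 d_def)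
  qed
  have t2: "N$2 * b \<le> 0" if "\<bar>b\<bar> \<le> e" for b
  proof -
    define d where "d = (vector [y$1, y$2 + b, y$3] :: R3)"
    have "(d$1)\<^sup>2 + (d$2)\<^sup>2 \<le> 9 * \<delta>0\<^sup>2"
    proof -
      have A: "e * (2*\<bar>y$2\<bar> + 1) \<le> e * (2*\<bar>y$1\<bar> + 2*\<bar>y$2\<bar> + 1)"
        using e0 by (intro mult_left_mono) auto
      show ?thesis using sq[OF that, of "y$2"] A em by (simp add: d_def m_def)
    qed
    then have "d \<in> {y. (y$1)\<^sup>2 + (y$2)\<^sup>2 \<le> 9 * \<delta>0\<^sup>2 \<and> (y$3 = 1 \<or> y$3 = -1)}"
      using y3 by (simp add: d_def)
    then have "d \<in> S" unfolding a(8)[symmetric] by blast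
    then have "N \<bullet> (d - y) \<le> 0" using supp a(5) by blast
    then show ?thesis by (simp add: inner3 d_def)
  qed
  have "N$1 * e = 0" using t1[of e] t1[of "-e"] e0 by simp
  then have N1: "N$1 = 0" using e0 by simp
  have "N$2 * e = 0" using t2[of e] t2[of "-e"] e0 by simp
  then have N2: "N$2 = 0" using e0 by simp
  have "(N$3)\<^sup>2 = 1" using normsq3[of N] nN N1 N2 by simp
  moreover have "N \<bullet> y > 0" using supp_pos[OF a(3) nN supp] .
  then have "N$3 * y$3 > 0" using N1 N2 by (simp add: inner3)
  ultimately have "N$3 = y$3" using y3 unfolding power2_eq_1_iff by auto
  then have "N = vector [0,0,y$3]" using N1 N2 by (simp add: vec_eq_iff forall_3)
  then show ?thesis using y3 N_def by simp
qed

lemma y3_bound: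
  assumes adm: "admissible_S \<delta>0 C S" and d0: "\<delta>0 > 0" and yS: "y \<in> S"
  shows "\<bar>y$3\<bar> \<le> 1"
proof -
  note a = adm_facts[OF adm]
  have q: "vector [0,0,s] \<in> S" if "s = 1 \<or> s = -1" for s :: real
  proof -
    have "(vector [0,0,s] :: R3) \<in> {y. (y$1)\<^sup>2 + (y$2)\<^sup>2 \<le> 9 * \<delta>0\<^sup>2 \<and> (y$3 = 1 \<or> y$3 = -1)}"
      using that by simp
    then show ?thesis unfolding a(8)[symmetric] by blast
  qed
  have "\<forall>c\<in>C. outward_normal C (vector [0,0,s]) \<bullet> (c - vector [0,0,s]) \<le> 0 \<and>
     outward_normal C (vector [0,0,s]) = vector [0,0,s]" if "s = 1 \<or> s = -1" for s :: real
    using nu_prop[OF adm q[OF that]] nu_flat[OF adm d0 q[OF that]] d0 by simp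
  from this[of 1] this[of "-1"] have "vector [0,0,1] \<bullet> (y - vector [0,0,1]) \<le> (0::real)"
    "vector [0,0,-1] \<bullet> (y - vector [0,0,-1]) \<le> (0::real)" using a(5) yS by auto
  then show ?thesis by (simp add: inner3)
qed
lemma keyineq:
  fixes x' z y :: R3
  assumes ye: "y = t *\<^sub>R vector [-(x'$2), x'$1, 1]" and t0: "t \<noteq> 0" and t1: "\<bar>t\<bar> \<le> 1"
    and zw: "z \<bullet> vector [y$2, -(y$1), 0] = x' \<bullet> vector [y$2, -(y$1), 0]"
  shows "sqrt ((y$1)\<^sup>2 + (y$2)\<^sup>2) \<le> norm z"
proof -
  define w :: R3 where "w = vector [y$2, -(y$1), 0]"
  define R where "R = (y$1)\<^sup>2 + (y$2)\<^sup>2"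
  have y12: "y$1 = -(t * x'$2)" "y$2 = t * x'$1" using ye by simp_all
  have xw: "x' \<bullet> w = t * ((x'$1)\<^sup>2 + (x'$2)\<^sup>2)" using y12
    by (simp add: w_def inner3 power2_eq_square algebra_simps)
  have R2: "R = t * (x' \<bullet> w)" using y12 xw by (simp add: R_def power2_eq_square algebra_simps)
  have R0: "R \<ge> 0" by (simp add: R_def)
  have nw: "norm w = sqrt R"
    using normsq3[of w] by (simp add: w_def R_def real_sqrt_unique[symmetric] power2_eq_square)
  have "R = \<bar>t\<bar> * \<bar>x' \<bullet> w\<bar>" using R2 R0 by (metis abs_mult abs_of_nonneg)
  also have "\<dots> \<le> \<bar>x' \<bullet> w\<bar>" using t1 by (simp add: mult_left_le_one_le)
  also have "\<dots> = \<bar>z \<bullet> w\<bar>" using zw w_def by simp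
  also have "\<dots> \<le> norm z * sqrt R" using Cauchy_Schwarz_ineq2[of z w] nw by simp
  finally have Rle: "R \<le> norm z * sqrt R" .
  show ?thesis
  proof (cases "R = 0")
    case True then show ?thesis by (simp add: R_def[symmetric])
  next
    case False
    then have sp: "sqrt R > 0" using R0 by simp
    have "sqrt R * sqrt R \<le> norm z * sqrt R" using Rle R0 by (simp only: real_sqrt_mult_self)
    then have "sqrt R \<le> norm z" using sp by (rule mult_right_le_imp_le)
    then show ?thesis by (simp add: R_def)
  qed
qed
lemma link_tangent:
  assumes "is_link K" "x \<in> K"
  shows "\<exists>v\<in>tangent_space K x. v \<noteq> 0"
proof -
  obtain n and \<gamma> :: "nat \<Rightarrow> real \<Rightarrow> R3" where L0: "n \<ge> 1 \<and> K = (\<Union>i<n. range (\<gamma> i)) \<and>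
      (\<forall>i<n. smooth_on UNIV (\<gamma> i) \<and> (\<forall>t. \<gamma> i (t + 1) = \<gamma> i t) \<and> inj_on (\<gamma> i) {0..<1} \<and>
             (\<forall>t. vector_derivative (\<gamma> i) (at t) \<noteq> 0)) \<and>
      (\<forall>i<n. \<forall>j<n. i \<noteq> j \<longrightarrow> range (\<gamma> i) \<inter> range (\<gamma> j) = {})"
    using assms(1) unfolding is_link_def by blast
  then have L1: "K = (\<Union>i<n. range (\<gamma> i))"
    and L2: "\<And>i. i < n \<Longrightarrow> smooth_on UNIV (\<gamma> i)"
    and L3: "\<And>i t. i < n \<Longrightarrow> vector_derivative (\<gamma> i) (at t) \<noteq> 0" by simp_all
  obtain i t0 where it: "i < n" "x = \<gamma> i t0" using L1 assms(2) by blast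
  have "Ck (Suc 0) (\<gamma> i) UNIV" using L2[OF it(1)] unfolding smooth_on_def by blast
  then have dif: "\<gamma> i differentiable (at t0)" by simp
  define v where "v = vector_derivative (\<gamma> i) (at t0)"
  have v0: "v \<noteq> 0" unfolding v_def using L3[OF it(1)] .
  have hv: "(\<gamma> i has_vector_derivative v) (at t0)" using dif vector_derivative_works v_def by blast
  have h0: "((\<lambda>s. t0 + s) has_field_derivative 1) (at 0)"
    by (auto intro!: derivative_eq_intros)
  have h1: "((\<lambda>s. t0 + s) has_vector_derivative 1) (at 0)"
    using h0 has_real_derivative_iff_has_vector_derivative by blast
  have hv': "(\<gamma> i has_vector_derivative v) (at ((\<lambda>s. t0 + s) 0))" using hv by simp
  have c: "((\<gamma> i \<circ> (\<lambda>s. t0 + s)) has_vector_derivative (1 *\<^sub>R v)) (at 0)"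
    by (rule vector_diff_chain_at[OF h1 hv'])
  have mem: "\<forall>s. (\<gamma> i \<circ> (\<lambda>s. t0 + s)) s \<in> K" using L1 it(1) by auto
  have c0: "(\<gamma> i \<circ> (\<lambda>s. t0 + s)) 0 = x" using it(2) by simp
  have "v \<in> tangent_space K x"
    unfolding tangent_space_def using mem c0 c by (intro CollectI exI[of _ "\<gamma> i \<circ> (\<lambda>s. t0 + s)"]) simp
  then show ?thesis using v0 by blast
qed

lemma bar_eq: "bar \<nu> (x, y) = (y, x - (x \<bullet> \<nu> y) *\<^sub>R \<nu> y)"
  by (simp add: bar_def)

lemma Nw0:
  assumes "admissible_S \<delta>0 C S" "y \<in> S"
  shows "outward_normal C y \<bullet> (vector [y$2, -(y$1), 0] :: R3) = 0"
  using nu_rot[OF assms] by (simp add: inner3 algebra_simps)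

theorem lemma3p8:
  fixes \<delta>0 \<delta> :: real and C S :: "R3 set" and \<nu> :: "R3 \<Rightarrow> R3"
    and J :: "pt6 \<Rightarrow> pt6 \<Rightarrow> pt6" and K :: "R3 set"
  assumes "\<delta>0 > 0"
    and "admissible_S \<delta>0 C S"
    and "\<nu> = outward_normal C"
    and "compatible_acs S \<nu> J"
    and "0 < \<delta>" and "\<delta> < \<delta>0"
    and "\<forall>K'. is_link K' \<and> K' \<subseteq> ball 0 \<delta> \<longrightarrow>
           (\<forall>P u. hol_disk_one_pos S \<nu> J K' P u \<longrightarrow>
              (\<forall>z\<in>cball 0 1 - P. norm (snd (u z)) < 2 * \<delta>0))"
    and "is_link K" and "K \<subseteq> ball 0 \<delta>" and "transverse_xi0 K"
  shows "\<forall>\<sigma>\<in>{1, -1::real}.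
           bar \<nu> ` LambdaK S K \<inter> bar \<nu> ` Hset S \<sigma> = {} \<and>
           (\<forall>P u. hol_disk_one_pos S \<nu> J K P u \<longrightarrow>
              (\<forall>z\<in>cball 0 1 - P. u z \<notin> bar \<nu> ` Hset S \<sigma> - bar \<nu> ` Hset_r S \<sigma> (2 * \<delta>0)))"
proof (intro ballI conjI allI impI)
  fix \<sigma> :: real
  note adm = assms(2) and d0 = assms(1) and nu = assms(3)
  show "bar \<nu> ` LambdaK S K \<inter> bar \<nu> ` Hset S \<sigma> = {}"
  proof (rule ccontr)
    assume "bar \<nu> ` LambdaK S K \<inter> bar \<nu> ` Hset S \<sigma> \<noteq> {}"
    then obtain p q where pq: "p \<in> LambdaK S K" "q \<in> Hset S \<sigma>" "bar \<nu> p = bar \<nu> q" by force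
    obtain x y where pxy: "p = (x,y)" by (cases p)
    obtain x' y' where qxy: "q = (x',y')" by (cases q)
    have xy: "(x,y) \<in> LambdaK S K" and xy': "(x',y') \<in> Hset S \<sigma>"
      and eq: "bar \<nu> (x,y) = bar \<nu> (x',y')" using pq pxy qxy by auto
    have yy: "y' = y" and beq: "x - (x \<bullet> \<nu> y) *\<^sub>R \<nu> y = x' - (x' \<bullet> \<nu> y) *\<^sub>R \<nu> y"
      using eq by (auto simp add: bar_eq)
    define N where "N = \<nu> y"
    have xK: "x \<in> K" and yS: "y \<in> S" and perp: "\<forall>v\<in>tangent_space K x. y \<bullet> v = 0"
      using xy by (auto simp: LambdaK_def)
    obtain t where t: "\<sigma> * t > 0" and ye: "y = t *\<^sub>R vector [- (x'$2), x'$1, 1]"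
      using xy' yy by (auto simp: Hset_def)
    have t0: "t \<noteq> 0" using t by auto
    have y3: "y$3 = t" using ye by simp
    have t1: "\<bar>t\<bar> \<le> 1" using y3_bound[OF adm d0 yS] y3 by simp
    define w :: R3 where "w = vector [y$2, -(y$1), 0]"
    have Nw: "N \<bullet> w = 0" using Nw0[OF adm yS] nu by (simp add: N_def w_def)
    have "x \<bullet> w = x' \<bullet> w"
    proof -
      have "(x - (x \<bullet> N) *\<^sub>R N) \<bullet> w = (x' - (x' \<bullet> N) *\<^sub>R N) \<bullet> w" using beq N_def by simp
      then show ?thesis using Nw by (simp add: inner_diff_left)
    qed
    then have sq: "sqrt ((y$1)\<^sup>2 + (y$2)\<^sup>2) \<le> norm x"
      using keyineq[OF ye t0 t1] w_def by simp
    have "norm x < \<delta>" using xK assms(9) by auto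
    then have "sqrt ((y$1)\<^sup>2 + (y$2)\<^sup>2) < sqrt (9 * \<delta>0\<^sup>2)"
      using sq assms(6) d0 by (simp add: real_sqrt_mult)
    then have "(y$1)\<^sup>2 + (y$2)\<^sup>2 < 9 * \<delta>0\<^sup>2" by (simp only: real_sqrt_less_iff)
    then have fl: "N = vector [0,0,y$3]" using nu_flat[OF adm d0 yS] nu N_def by simp
    have "x$1 = x'$1" "x$2 = x'$2"
      using arg_cong[OF beq, of "\<lambda>z. z$1"] arg_cong[OF beq, of "\<lambda>z. z$2"] fl N_def by simp_all
    then have ye2: "y = t *\<^sub>R vector [- (x$2), x$1, 1]" using ye by simp
    obtain v where v: "v \<in> tangent_space K x" "v \<noteq> 0" using link_tangent[OF assms(8) xK] by blast
    have "y \<bullet> v = t * alpha0 x v" using ye2 by (simp add: inner3 alpha0_def algebra_simps)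
    then have "alpha0 x v = 0" using perp v(1) t0 by simp
    then show False using assms(10) xK v unfolding transverse_xi0_def by blast
  qed
next
  fix \<sigma> :: real and P u z
  note adm = assms(2) and d0 = assms(1) and nu = assms(3)
  assume hd: "hol_disk_one_pos S \<nu> J K P u" and z: "z \<in> cball 0 1 - P"
  have nb: "norm (snd (u z)) < 2 * \<delta>0" using assms(7) assms(8) assms(9) hd z by blast
  show "u z \<notin> bar \<nu> ` Hset S \<sigma> - bar \<nu> ` Hset_r S \<sigma> (2 * \<delta>0)"
  proof
    assume "u z \<in> bar \<nu> ` Hset S \<sigma> - bar \<nu> ` Hset_r S \<sigma> (2 * \<delta>0)"
    then obtain x' y where H: "(x',y) \<in> Hset S \<sigma>" and uz: "u z = bar \<nu> (x',y)"
      and nr: "u z \<notin> bar \<nu> ` Hset_r S \<sigma> (2 * \<delta>0)" by auto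
    have yE: "y \<notin> E_set (2 * \<delta>0)"
    proof
      assume "y \<in> E_set (2 * \<delta>0)"
      then have "(x',y) \<in> Hset_r S \<sigma> (2 * \<delta>0)" using H by (simp add: Hset_r_def)
      then show False using nr uz by blast
    qed
    have yS: "y \<in> S" using H by (simp add: Hset_def)
    obtain t where t: "\<sigma> * t > 0" and ye: "y = t *\<^sub>R vector [- (x'$2), x'$1, 1]"
      using H by (auto simp: Hset_def)
    have t0: "t \<noteq> 0" using t by auto
    have y3: "y$3 = t" using ye by simp
    have t1: "\<bar>t\<bar> \<le> 1" using y3_bound[OF adm d0 yS] y3 by simp
    define N where "N = \<nu> y"
    define w :: R3 where "w = vector [y$2, -(y$1), 0]"
    have Nw: "N \<bullet> w = 0" using Nw0[OF adm yS] nu by (simp add: N_def w_def)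
    define Q where "Q = x' - (x' \<bullet> N) *\<^sub>R N"
    have sn: "snd (u z) = Q" using uz by (simp add: bar_eq Q_def N_def)
    have "Q \<bullet> w = x' \<bullet> w" using Nw by (simp add: Q_def inner_diff_left)
    then have sq: "sqrt ((y$1)\<^sup>2 + (y$2)\<^sup>2) \<le> norm Q"
      using keyineq[OF ye t0 t1] w_def by simp
    have R4: "(y$1)\<^sup>2 + (y$2)\<^sup>2 > (2*\<delta>0)\<^sup>2"
    proof (rule ccontr)
      assume "\<not> ?thesis"
      then have le: "(y$1)\<^sup>2 + (y$2)\<^sup>2 \<le> (2*\<delta>0)\<^sup>2" by simp
      moreover have "(2*\<delta>0)\<^sup>2 < 9 * \<delta>0\<^sup>2" using d0 by (simp add: power2_eq_square)
      ultimately have "(y$1)\<^sup>2 + (y$2)\<^sup>2 < 9 * \<delta>0\<^sup>2" by linarith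
      then have "y$3 = 1 \<or> y$3 = -1" using nu_flat[OF adm d0 yS] by simp
      then have "y \<in> E_set (2 * \<delta>0)" using le by (simp add: E_set_def)
      then show False using yE by simp
    qed
    have "2*\<delta>0 < sqrt ((y$1)\<^sup>2 + (y$2)\<^sup>2)" using R4 d0 by (simp add: real_less_rsqrt)
    then show False using sq nb sn by simp
  qed
qed
end
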